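(* Let $k$ be a field of characteristic $0$ and let $d_1,\dots,d_n$ be positive integers with $t=\sum_{i=1}^n(d_i-1)$ odd. Let $X\subset\mathbb{P}^{n-1}(k)$ be the set of points represented by $(a_1,\dots,a_{n-1},1)$ with $a_i\in\{(d_i-1)-2j\mid 0\le j\le d_i-1\}$ for $1\le i\le n-1$ and such that $1+\sum_{i=1}^{n-1}a_i\in\{(d_n-1)-2j\mid 0\le j\le d_n-1\}$. Then $$|X|=\big[T^{\frac{t-1}{2}}\big]\frac{\prod_{i=1}^n(1-T^{d_i})}{(1-T)^n}.$$
   Context: For a power series $f$, $[T^a]f$ denotes the coefficient of $T^a$ in $f$. *)

theory Defs
  imports Complex_Main "HOL-Computational_Algebra.Formal_Power_Series"
begin

text \<open>Vectors of k^n are modelled as functions nat => 'k supported on {1..n}.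
  The projective point of P^(n-1)(k) represented by a nonzero vector v is its
  class under nonzero scaling.\<close>
definition proj_point :: "(nat \<Rightarrow> 'k::field) \<Rightarrow> (nat \<Rightarrow> 'k) set" where
  "proj_point v = {(\<lambda>i. c * v i) | c. c \<noteq> 0}"

definition vals :: "nat \<Rightarrow> int set" where
  "vals d = {int (d - 1) - 2 * int j | j. j \<le> d - 1}"

definition reps :: "nat \<Rightarrow> (nat \<Rightarrow> nat) \<Rightarrow> (nat \<Rightarrow> 'k::field_char_0) set" where
  "reps n d = {a. (\<forall>i. i \<notin> {1..n} \<longrightarrow> a i = 0) \<and> a n = 1 \<and>
      (\<forall>i\<in>{1..n-1}. \<exists>v\<in>vals (d i). a i = of_int v) \<and>
      (\<exists>v\<in>vals (d n). 1 + (\<Sum>i=1..n-1. a i) = of_int v)}"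

definition Xset :: "nat \<Rightarrow> (nat \<Rightarrow> nat) \<Rightarrow> (nat \<Rightarrow> 'k::field_char_0) set set" where
  "Xset n d = proj_point ` reps n d"

end

theory Submission
  imports Defs
begin


lemma card_X: "card (Xset n d :: (nat \<Rightarrow> 'k::field_char_0) set set) = card (reps n d :: (nat \<Rightarrow> 'k) set)"
  unfolding Xset_def
proof (rule card_image, rule inj_onI)
  fix a b :: "nat \<Rightarrow> 'k" assume a: "a \<in> reps n d" and b: "b \<in> reps n d" and e: "proj_point a = proj_point b"
  have "a \<in> proj_point a" unfolding proj_point_def by (rule CollectI, rule exI[of _ 1]) simp
  then have "a \<in> proj_point b" using e by simp
  then obtain c where c: "a = (\<lambda>i. c * b i)" unfolding proj_point_def by auto
  have "a n = 1" "b n = 1" using a b unfolding reps_def by auto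
  then have "c = 1" using c by (metis mult.right_neutral)
  then show "a = b" using c by simp
qed

lemma prod_ind: "finite A \<Longrightarrow> (\<Prod>j\<in>A. (if P j then 1 else 0)) = (if \<forall>j\<in>A. P j then 1 else (0::'a::comm_semiring_1))"
  by (induction A rule: finite_induct) auto

lemma coeff_part:
  fixes N m :: nat
  shows "fps_nth ((\<Prod>i=1..Suc m. (1 - fps_X ^ d i)) / (1 - fps_X) ^ Suc m :: rat fps) N
     = of_nat (card {v \<in> natpermute N (Suc m). \<forall>j<Suc m. v!j < d (Suc j)})"
proof -
  define G where "G i = (\<Sum>j<d i. fps_X^j :: rat fps)" for i
  have "(\<Prod>i=1..Suc m. (1 - fps_X ^ d i)) = (\<Prod>i=1..Suc m. G i * (1 - fps_X :: rat fps))"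
    unfolding G_def by (intro prod.cong refl) (simp add: one_diff_power_eq mult.commute)
  also have "\<dots> = (\<Prod>i=1..Suc m. G i) * (1 - fps_X) ^ Suc m"
    by (simp add: prod.distrib)
  finally have 1: "(\<Prod>i=1..Suc m. (1 - fps_X ^ d i)) = (\<Prod>i=1..Suc m. G i) * (1 - fps_X) ^ Suc m" .
  have nz: "(1 - fps_X :: rat fps) ^ Suc m \<noteq> 0"
  proof -
    have "(1 - fps_X :: rat fps) \<noteq> 0" proof assume "(1 - fps_X :: rat fps) = 0" then have "fps_nth (1 - fps_X :: rat fps) 0 = 0" by simp then show False by simp qed
    then show ?thesis by simp
  qed
  have 2: "(\<Prod>i=1..Suc m. G i) = (\<Prod>j=0..m. G (Suc j))"
    using prod.shift_bounds_cl_Suc_ivl[of G 0 m] by simp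
  have G: "fps_nth (G i) e = (if e < d i then 1 else 0)" for i e
    unfolding G_def fps_sum_nth by (simp add: sum.delta)
  have "fps_nth ((\<Prod>i=1..Suc m. (1 - fps_X ^ d i)) / (1 - fps_X) ^ Suc m :: rat fps) N
     = fps_nth (\<Prod>j=0..m. G (Suc j)) N" unfolding 1 using nz 2 by simp
  also have "\<dots> = (\<Sum>v\<in>natpermute N (m+1). \<Prod>j=0..m. fps_nth (G (Suc j)) (v!j))" by (rule fps_prod_nth)
  also have "\<dots> = (\<Sum>v\<in>natpermute N (m+1). if \<forall>j\<in>{0..m}. v!j < d (Suc j) then 1 else 0)"
    unfolding G by (simp add: prod_ind)
  also have "\<dots> = of_nat (card {v \<in> natpermute N (Suc m). \<forall>j<Suc m. v!j < d (Suc j)})"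
    by (simp add: sum.If_cases natpermute_finite atLeast0AtMost less_Suc_eq_le Int_def atMost_iff conj_commute Ball_def)
  finally show ?thesis .
qed


lemma sum_shift1: fixes n :: nat shows "(\<Sum>i=1..n. g (i-1)) = (\<Sum>i<n. (g i :: 'a::comm_monoid_add))"
  by (induction n) auto

lemma sum_list_shift: "length v = n \<Longrightarrow> sum_list v = (\<Sum>i=1..n. v!(i-1))"
  using sum_shift1[of "(!) v" n] by (simp add: sum_list_sum_nth atLeast0LessThan)

lemma sum_split_last: fixes n :: nat shows "n \<ge> 1 \<Longrightarrow> (\<Sum>i=1..n. h i) = (\<Sum>i=1..n-1. h i) + (h n :: 'a::comm_monoid_add)"
  by (cases n) (auto simp: add.commute)

lemma reps_card:
  assumes n1: "n \<ge> 1" and dpos: "\<forall>i\<in>{1..n}. d i > 0" and tN: "2*N + 1 = (\<Sum>i=1..n. d i - 1)"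
  shows "card (reps n d :: (nat \<Rightarrow> 'k::field_char_0) set) = card {v \<in> natpermute N n. \<forall>j<n. v!j < d (Suc j)}"
proof -
  define L where "L = {v \<in> natpermute N n. \<forall>j<n. v!j < d (Suc j)}"
  define f :: "nat list \<Rightarrow> nat \<Rightarrow> 'k" where "f v = (\<lambda>i. if i \<in> {1..n-1} then of_int (2*int (v!(i-1)) - int (d i - 1)) else if i = n then 1 else 0)" for v
  have tNi: "2 * int N + 1 = (\<Sum>i=1..n. int (d i - 1))"
    using arg_cong[OF tN, of int] by simp
  have Lsum: "int N = (\<Sum>i=1..n. int (v!(i-1)))" if "v \<in> L" for v
  proof -
    have "length v = n" "sum_list v = N" using that unfolding L_def natpermute_def by auto
    then show ?thesis using sum_list_shift[of v n] by (metis of_nat_sum)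
  qed
  have inj: "inj_on f L"
  proof (rule inj_onI)
    fix v w assume v: "v \<in> L" and w: "w \<in> L" and e: "f v = f w"
    have lv: "length v = n" and lw: "length w = n" using v w unfolding L_def natpermute_def by auto
    have lt: "v!j = w!j" if "j < n-1" for j
    proof -
      have "f v (Suc j) = f w (Suc j)" using e by simp
      then have "(of_int (2*int (v!j) - int (d (Suc j) - 1)) :: 'k) = of_int (2*int (w!j) - int (d (Suc j) - 1))"
        using that unfolding f_def by simp
      then show ?thesis by simp
    qed
    have "(\<Sum>i=1..n-1. int (v!(i-1))) = (\<Sum>i=1..n-1. int (w!(i-1)))"
    proof (intro sum.cong refl)
      fix x assume "x \<in> {1..n-1}"
      then have "x-1 < n-1" by auto
      then show "int (v!(x-1)) = int (w!(x-1))" using lt by simp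
    qed
    moreover have "int N = (\<Sum>i=1..n-1. int (v!(i-1))) + int (v!(n-1))"
      using Lsum[OF v] sum_split_last[OF n1] by simp
    moreover have "int N = (\<Sum>i=1..n-1. int (w!(i-1))) + int (w!(n-1))"
      using Lsum[OF w] sum_split_last[OF n1] by simp
    ultimately have last: "v!(n-1) = w!(n-1)" by linarith
    show "v = w"
    proof (rule nth_equalityI)
      show "length v = length w" using lv lw by simp
      fix j assume "j < length v"
      then have "j < n-1 \<or> j = n-1" using lv by linarith
      then show "v!j = w!j" using lt last by blast
    qed
  qed
  have sub1: "f ` L \<subseteq> reps n d"
  proof
    fix a assume "a \<in> f ` L"
    then obtain v where v: "v \<in> L" and a: "a = f v" by auto
    have lv: "length v = n" and vlt: "\<forall>j<n. v!j < d (Suc j)" using v unfolding L_def natpermute_def by auto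
    have c1: "\<exists>u\<in>vals (d i). a i = of_int u" if i: "i \<in> {1..n-1}" for i
    proof -
      have "v!(i-1) < d i" using vlt i by (metis Suc_pred' atLeastAtMost_iff diff_less le_trans less_one nat_less_le n1 not_le)
      then have "2*int (v!(i-1)) - int (d i - 1) = int (d i - 1) - 2 * int (d i - 1 - v!(i-1))" by simp
      then have "2*int (v!(i-1)) - int (d i - 1) \<in> vals (d i)" unfolding vals_def
        by (intro CollectI exI[of _ "d i - 1 - v!(i-1)"]) simp
      moreover have "a i = of_int (2*int (v!(i-1)) - int (d i - 1))" unfolding a f_def using i by simp
      ultimately show ?thesis by blast
    qed
    have vn: "v!(n-1) < d n"
    proof -
      have "n-1 < n" using n1 by simp
      then have "v!(n-1) < d (Suc (n-1))" using vlt by blast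
      then show ?thesis using n1 by simp
    qed
    have "1 + (\<Sum>i=1..n-1. a i) = 1 + (\<Sum>i=1..n-1. (of_int (2*int (v!(i-1)) - int (d i - 1)) :: 'k))"
      unfolding a f_def by simp
    also have "\<dots> = of_int (1 + (\<Sum>i=1..n-1. 2*int (v!(i-1)) - int (d i - 1)))" by simp
    also have "(1 + (\<Sum>i=1..n-1. 2*int (v!(i-1)) - int (d i - 1))) = int (d n - 1) - 2 * int (v!(n-1))"
    proof -
      have A: "int N = (\<Sum>i=1..n-1. int (v!(i-1))) + int (v!(n-1))"
        using Lsum[OF v] sum_split_last[OF n1] by simp
      have B: "2 * int N + 1 = (\<Sum>i=1..n-1. int (d i - 1)) + int (d n - 1)"
        using tNi sum_split_last[OF n1] by simp
      have C: "(\<Sum>i=1..n-1. 2*int (v!(i-1)) - int (d i - 1)) = 2 * (\<Sum>i=1..n-1. int (v!(i-1))) - (\<Sum>i=1..n-1. int (d i - 1))"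
        by (simp add: sum_subtractf sum_distrib_left)
      show ?thesis using A B C by linarith
    qed
    finally have "1 + (\<Sum>i=1..n-1. a i) = of_int (int (d n - 1) - 2 * int (v!(n-1)))" .
    moreover have "int (d n - 1) - 2 * int (v!(n-1)) \<in> vals (d n)" unfolding vals_def
      using vn by (intro CollectI exI[of _ "v!(n-1)"]) simp
    ultimately have c2: "\<exists>u\<in>vals (d n). 1 + (\<Sum>i=1..n-1. a i) = of_int u" by blast
    have c0: "\<forall>i. i \<notin> {1..n} \<longrightarrow> a i = 0" unfolding a f_def using n1 by auto
    have "a n = 1" unfolding a f_def by auto
    then show "a \<in> reps n d" unfolding reps_def using c0 c1 c2 by blast
  qed
  have sub2: "reps n d \<subseteq> f ` L"
  proof
    fix a :: "nat \<Rightarrow> 'k" assume a: "a \<in> reps n d"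
    have "\<forall>i\<in>{1..n-1}. \<exists>j. j \<le> d i - 1 \<and> a i = of_int (int (d i - 1) - 2 * int j)"
      using a unfolding reps_def vals_def by fastforce
    then obtain jf where jf: "\<forall>i\<in>{1..n-1}. jf i \<le> d i - 1 \<and> a i = of_int (int (d i - 1) - 2 * int (jf i))"
      by metis
    obtain jl where jl: "jl \<le> d n - 1" "1 + (\<Sum>i=1..n-1. a i) = of_int (int (d n - 1) - 2 * int jl)"
      using a unfolding reps_def vals_def by blast
    have a0: "\<forall>i. i \<notin> {1..n} \<longrightarrow> a i = 0" and an: "a n = 1" using a unfolding reps_def by auto
    define v where "v = map (\<lambda>i. if i < n then d i - 1 - jf i else jl) [1..<Suc n]"
    have lv: "length v = n" unfolding v_def by simp
    have vi: "v!(i-1) = (if i < n then d i - 1 - jf i else jl)" if "i \<in> {1..n}" for i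
    proof -
      have "i - 1 < Suc n - 1" using that by auto
      then have "v!(i-1) = (\<lambda>i. if i < n then d i - 1 - jf i else jl) (1 + (i-1))"
        unfolding v_def by (rule nth_map_upt)
      moreover have "1 + (i - 1) = i" using that by auto
      ultimately show ?thesis by simp
    qed
    have fv: "f v = a"
    proof
      fix i show "f v i = a i"
      proof (cases "i \<in> {1..n-1}")
        case True
        then have "i < n" by auto
        have jfi: "jf i \<le> d i - 1" and ai: "a i = of_int (int (d i - 1) - 2 * int (jf i))"
          using jf True by auto
        have vv: "v!(i-1) = d i - 1 - jf i" using vi[of i] True \<open>i < n\<close> by auto
        have ie: "2*int (d i - 1 - jf i) - int (d i - 1) = int (d i - 1) - 2 * int (jf i)"
          using jfi by (simp add: of_nat_diff)
        have "f v i = of_int (2*int (v!(i-1)) - int (d i - 1))" unfolding f_def using True by simp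
        also have "\<dots> = of_int (int (d i - 1) - 2 * int (jf i))" by (simp only: vv ie)
        finally show ?thesis using ai by (simp only:)
      next
        case False
        then show ?thesis using a0 an unfolding f_def by auto
      qed
    qed
    have "sum_list v = N"
    proof -
      have "of_int (1 + (\<Sum>i=1..n-1. int (d i - 1) - 2 * int (jf i))) = (of_int (int (d n - 1) - 2 * int jl) :: 'k)"
      proof -
        have "(\<Sum>i=1..n-1. a i) = (\<Sum>i=1..n-1. of_int (int (d i - 1) - 2 * int (jf i)))"
          using jf by (intro sum.cong refl) auto
        have "of_int (1 + (\<Sum>i=1..n-1. int (d i - 1) - 2 * int (jf i))) = (1 + (\<Sum>i=1..n-1. of_int (int (d i - 1) - 2 * int (jf i))) :: 'k)"
          by (simp only: of_int_add of_int_1 of_int_sum)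
        also have "\<dots> = 1 + (\<Sum>i=1..n-1. a i)" by (simp only: \<open>(\<Sum>i=1..n-1. a i) = _\<close>)
        also have "\<dots> = of_int (int (d n - 1) - 2 * int jl)" by (rule jl(2))
        finally show ?thesis .
      qed
      then have E: "1 + (\<Sum>i=1..n-1. int (d i - 1) - 2 * int (jf i)) = int (d n - 1) - 2 * int jl"
        by (rule of_int_eq_iff[THEN iffD1])
      have S: "int (sum_list v) = (\<Sum>i=1..n-1. int (d i - 1 - jf i)) + int jl"
      proof -
        have "sum_list v = (\<Sum>i=1..n. v!(i-1))" by (rule sum_list_shift[OF lv])
        also have "\<dots> = (\<Sum>i=1..n-1. v!(i-1)) + v!(n-1)" by (rule sum_split_last[OF n1])
        also have "(\<Sum>i=1..n-1. v!(i-1)) = (\<Sum>i=1..n-1. d i - 1 - jf i)"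
        proof (intro sum.cong refl)
          fix i assume "i \<in> {1..n-1}"
          then show "v!(i-1) = d i - 1 - jf i" using vi[of i] by auto
        qed
        also have "v!(n-1) = jl" using vi[of n] n1 by auto
        finally have "sum_list v = (\<Sum>i=1..n-1. d i - 1 - jf i) + jl" .
        then show ?thesis by (simp only: of_nat_add of_nat_sum)
      qed
      have S2: "(\<Sum>i=1..n-1. int (d i - 1 - jf i)) = (\<Sum>i=1..n-1. int (d i - 1)) - (\<Sum>i=1..n-1. int (jf i))"
      proof -
        have "(\<Sum>i=1..n-1. int (d i - 1 - jf i)) = (\<Sum>i=1..n-1. int (d i - 1) - int (jf i))"
        proof (intro sum.cong refl)
          fix i assume "i \<in> {1..n-1}"
          then have "jf i \<le> d i - 1" using jf by blast
          then show "int (d i - 1 - jf i) = int (d i - 1) - int (jf i)" by (rule of_nat_diff)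
        qed
        then show ?thesis by (simp only: sum_subtractf)
      qed
      have E2: "(\<Sum>i=1..n-1. int (d i - 1) - 2 * int (jf i)) = (\<Sum>i=1..n-1. int (d i - 1)) - 2 * (\<Sum>i=1..n-1. int (jf i))"
        by (simp add: sum_subtractf sum_distrib_left)
      have B: "2 * int N + 1 = (\<Sum>i=1..n-1. int (d i - 1)) + int (d n - 1)"
        using tNi sum_split_last[OF n1] by simp
      have "int (sum_list v) = int N" using S S2 E E2 B by linarith
      then show ?thesis by simp
    qed
    have "\<forall>j<n. v!j < d (Suc j)"
    proof (intro allI impI)
      fix j assume j: "j < n"
      then have "v!j = (if Suc j < n then d (Suc j) - 1 - jf (Suc j) else jl)" using vi[of "Suc j"] by simp
      moreover have "d (Suc j) > 0" using dpos j by auto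
      moreover have "\<not> Suc j < n \<Longrightarrow> Suc j = n" using j by simp
      ultimately show "v!j < d (Suc j)" using jl(1) by (cases "Suc j < n") auto
    qed
    then have "v \<in> L" unfolding L_def natpermute_def using lv \<open>sum_list v = N\<close> by simp
    then show "a \<in> f ` L" using fv by blast
  qed
  have "card L = card (f ` L)" using inj by (simp add: card_image)
  also have "f ` L = reps n d" using sub1 sub2 by blast
  finally have "card L = card (reps n d :: (nat \<Rightarrow> 'k) set)" .
  then show ?thesis unfolding L_def by (rule sym)
qed

theorem mainTheorem8:
  fixes n :: nat and d :: "nat \<Rightarrow> nat"
  assumes "n \<ge> 1"
    and "\<forall>i\<in>{1..n}. d i > 0"
    and "odd (\<Sum>i=1..n. d i - 1)"
  shows "(of_nat (card (Xset n d :: (nat \<Rightarrow> 'k::field_char_0) set set)) :: rat) =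
    fps_nth ((\<Prod>i=1..n. (1 - fps_X ^ d i)) / (1 - fps_X) ^ n)
            (((\<Sum>i=1..n. d i - 1) - 1) div 2)"
proof -
  define t where "t = (\<Sum>i=1..n. d i - 1)"
  define N where "N = (t - 1) div 2"
  have tN: "2*N + 1 = (\<Sum>i=1..n. d i - 1)"
  proof -
    have "odd t" using assms(3) unfolding t_def .
    then have "2*((t - 1) div 2) + 1 = t" by presburger
    then show ?thesis unfolding N_def t_def .
  qed
  obtain m where m: "n = Suc m" using assms(1) by (cases n) auto
  have "card (Xset n d :: (nat \<Rightarrow> 'k) set set) = card (reps n d :: (nat \<Rightarrow> 'k) set)"
    by (rule card_X)
  also have "\<dots> = card {v \<in> natpermute N n. \<forall>j<n. v!j < d (Suc j)}"
    by (rule reps_card[OF assms(1) assms(2) tN])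
  finally have c: "card (Xset n d :: (nat \<Rightarrow> 'k) set set) = card {v \<in> natpermute N n. \<forall>j<n. v!j < d (Suc j)}" .
  have e1: "(((\<Sum>i=1..n. d i - 1) - 1) div 2) = N" unfolding N_def t_def ..
  have e2: "fps_nth ((\<Prod>i=1..n. (1 - fps_X ^ d i)) / (1 - fps_X) ^ n :: rat fps) N
     = of_nat (card {v \<in> natpermute N n. \<forall>j<n. v!j < d (Suc j)})"
    using coeff_part[of d m N] unfolding m[symmetric] .
  show ?thesis unfolding e1 e2 c ..
qed

end
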